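(* Let $0<r<s<\infty$, $\alpha>0$, $\beta>0$. For $n\ge3$ let $h_*=h_*(n)>0$ solve $\frac{2\alpha}{h_*^r}+\frac{2\beta}{h_*^s}=\log n-(\log\log n)^2$ and let $h_+=h_+(n)>0$ solve $\frac{2\alpha}{h_+^r}+\frac{2\beta}{h_+^s}=\log n+(\log\log n)^2$. Then $h_+(n)=(\log n/(2\beta))^{-1/s}(1+o(1))$, and for all $a\in\mathbb{R}$, $b\in\mathbb{R}$, as $n\to\infty$, $$h_+^a\exp\Big(-\frac{2\alpha}{h_+^r}\Big)=h_*^a\exp\Big(-\frac{2\alpha}{h_*^r}\Big)(1+o(1)),\qquad(\log n)^b\,n\exp\Big(-\frac{2\alpha}{h_+^r}-\frac{2\beta}{h_+^s}\Big)=o(1).$$ *)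

theory Defs
  imports Complex_Main "HOL-Library.Landau_Symbols"
begin

end

theory Submission imports Defs "HOL-Real_Asymp.Real_Asymp" begin

lemma aux_ratio:
  fixes A B T :: "nat \<Rightarrow> real" and q c d :: real
  assumes q: "0<q" "q<1" and cd: "c>0" "d>0" and T: "filterlim T at_top sequentially"
    and ev: "eventually (\<lambda>n. A n + B n = T n \<and> A n = c * (B n / d) powr q \<and> B n > 0) sequentially"
  shows "((\<lambda>n. B n / T n) \<longlongrightarrow> 1) sequentially"
proof -
  have X: "filterlim (\<lambda>n. (1/d) * T n) at_top sequentially"
    by (rule filterlim_tendsto_pos_mult_at_top[OF tendsto_const _ T]) (use cd in auto)
  have Z0: "((\<lambda>n. ((1/d) * T n) powr (q-1)) \<longlongrightarrow> 0) sequentially"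
    by (rule tendsto_neg_powr[OF _ X]) (use q in auto)
  have Z: "((\<lambda>n. c/d * ((1/d) * T n) powr (q-1)) \<longlongrightarrow> 0) sequentially"
    using tendsto_mult_right_zero[OF Z0, of "c/d"] by simp
  have Tpos: "eventually (\<lambda>n. T n > 0) sequentially"
    using T by (simp add: filterlim_at_top_dense)
  have ev2: "eventually (\<lambda>n. 0 \<le> A n / T n \<and> A n / T n \<le> c/d * ((1/d) * T n) powr (q-1)) sequentially"
    using ev Tpos
  proof eventually_elim
    case (elim n)
    then have e1: "A n + B n = T n" and e2: "A n = c * (B n / d) powr q" and Bp: "B n > 0" and Tp: "T n > 0"
      by auto
    have Apos: "A n > 0" using e2 Bp cd by simp
    have BT: "B n / d \<le> (1/d) * T n" using e1 Apos cd by (simp add: divide_right_mono)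
    have "A n \<le> c * ((1/d) * T n) powr q"
      using e2 powr_mono2[OF _ _ BT, of q] q cd Bp by (simp add: mult_left_mono)
    also have "\<dots> = c/d * ((1/d) * T n) powr (q-1) * T n"
    proof -
      have "((1/d) * T n) powr q = ((1/d) * T n) powr (q-1) * ((1/d) * T n)"
        using Tp cd by (simp add: powr_diff)
      then show ?thesis by simp
    qed
    finally have "A n / T n \<le> c/d * ((1/d) * T n) powr (q-1)"
      using Tp by (simp add: divide_le_eq)
    then show ?case using Apos Tp by simp
  qed
  have AT: "((\<lambda>n. A n / T n) \<longlongrightarrow> 0) sequentially"
    by (rule real_tendsto_sandwich[OF _ _ tendsto_const Z]) (use ev2 in \<open>auto elim: eventually_mono\<close>)
  have "((\<lambda>n. 1 - A n / T n) \<longlongrightarrow> 1 - 0) sequentially"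
    by (intro tendsto_intros AT)
  then have "((\<lambda>n. 1 - A n / T n) \<longlongrightarrow> 1) sequentially" by simp
  moreover have "eventually (\<lambda>n. 1 - A n / T n = B n / T n) sequentially"
    using ev Tpos by eventually_elim (auto simp: field_simps)
  ultimately show ?thesis by (rule Lim_transform_eventually)
qed

lemma aux_h:
  fixes B L h :: "nat \<Rightarrow> real" and d p :: real
  assumes lim: "((\<lambda>n. B n / L n) \<longlongrightarrow> 1) sequentially" and "d > 0"
    and ev: "eventually (\<lambda>n. h n = (B n / d) powr p \<and> B n > 0 \<and> L n > 0) sequentially"
  shows "((\<lambda>n. h n / (L n / d) powr p) \<longlongrightarrow> 1) sequentially"
proof -
  have "((\<lambda>n. (B n / L n) powr p) \<longlongrightarrow> 1 powr p) sequentially"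
    by (intro tendsto_intros lim) auto
  then have l: "((\<lambda>n. (B n / L n) powr p) \<longlongrightarrow> 1) sequentially" by simp
  have "eventually (\<lambda>n. (B n / L n) powr p = h n / (L n / d) powr p) sequentially"
    using ev
  proof eventually_elim
    case (elim n)
    then have "(B n / L n) = (B n / d) / (L n / d)" using assms(2) by simp
    then show ?case using elim assms(2) by (simp add: powr_divide)
  qed
  with l show ?thesis by (rule Lim_transform_eventually)
qed

lemma aux_conc:
  fixes x y q :: real
  assumes "0 < y" "y \<le> x" "0 < q" "q < 1"
  shows "x powr q - y powr q \<le> y powr (q-1) * (x - y)"
proof -
  have "(x/y) powr q \<le> (x/y) powr 1"
    using assms by (intro powr_mono) auto
  then have a: "(x/y) powr q \<le> x / y" using assms by simp
  have "x powr q = y powr q * (x/y) powr q"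
    using assms by (simp add: powr_divide)
  also have "\<dots> \<le> y powr q * (x / y)"
    using a assms by (intro mult_left_mono) auto
  also have "\<dots> = y powr (q-1) * x"
    using assms by (simp add: powr_diff)
  finally have "x powr q \<le> y powr (q-1) * x" .
  moreover have "y powr q = y powr (q-1) * y"
    using assms by (simp add: powr_diff)
  ultimately show ?thesis by (simp add: right_diff_distrib)
qed


theorem lemma9:
  fixes r s \<alpha> \<beta> a b :: real and hs hp :: "nat \<Rightarrow> real"
  assumes "0 < r" "r < s" "0 < \<alpha>" "0 < \<beta>"
    and hs: "\<And>n. n \<ge> 3 \<Longrightarrow> hs n > 0 \<and>
       2 * \<alpha> / hs n powr r + 2 * \<beta> / hs n powr s = ln (real n) - (ln (ln (real n)))^2"
    and hp: "\<And>n. n \<ge> 3 \<Longrightarrow> hp n > 0 \<and>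
       2 * \<alpha> / hp n powr r + 2 * \<beta> / hp n powr s = ln (real n) + (ln (ln (real n)))^2"
  shows "hp \<sim>[at_top] (\<lambda>n. (ln (real n) / (2 * \<beta>)) powr (- 1 / s)) \<and>
         (\<lambda>n. hp n powr a * exp (- 2 * \<alpha> / hp n powr r)) \<sim>[at_top]
         (\<lambda>n. hs n powr a * exp (- 2 * \<alpha> / hs n powr r)) \<and>
         (\<lambda>n. ln (real n) powr b * real n *
            exp (- 2 * \<alpha> / hp n powr r - 2 * \<beta> / hp n powr s)) \<longlonglongrightarrow> 0"
proof -
  define q where "q = r / s"
  define c where "c = 2 * \<alpha>"
  define d where "d = 2 * \<beta>"
  define L where "L = (\<lambda>n::nat. ln (real n))"
  define e where "e = (\<lambda>n::nat. (ln (ln (real n)))^2)"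
  define Ap where "Ap = (\<lambda>n. c / hp n powr r)"
  define Bp where "Bp = (\<lambda>n. d / hp n powr s)"
  define As where "As = (\<lambda>n. c / hs n powr r)"
  define Bs where "Bs = (\<lambda>n. d / hs n powr s)"
  have s0: "s > 0" using assms by simp
  have q: "0 < q" "q < 1" using assms by (auto simp: q_def)
  have cd: "c > 0" "d > 0" using assms by (auto simp: c_def d_def)
  have rel: "c / h powr r = c * ((d / h powr s) / d) powr q" if "h > 0" for h :: real
  proof -
    have "(d / h powr s) / d = h powr (-s)" using cd that by (simp add: powr_minus_divide)
    then have "((d / h powr s) / d) powr q = h powr (-r)"
      using s0 that by (simp add: powr_powr q_def)
    then show ?thesis using that by (simp add: powr_minus_divide)
  qed
  have hrel: "h = ((d / h powr s) / d) powr (-1/s)" if "h > 0" for h :: real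
  proof -
    have "(d / h powr s) / d = h powr (-s)" using cd that by (simp add: powr_minus_divide)
    then show ?thesis using s0 that by (simp add: powr_powr)
  qed
  have ev4: "eventually (\<lambda>n::nat. n \<ge> 4) sequentially" by (rule eventually_ge_at_top)
  have basic: "eventually (\<lambda>n. hp n > 0 \<and> hs n > 0 \<and> Ap n + Bp n = L n + e n \<and>
      As n + Bs n = L n - e n \<and> e n > 0 \<and> L n > 0 \<and> L n - e n > 0) sequentially"
    using ev4
  proof eventually_elim
    case (elim n)
    have "exp 1 < real n" using exp_le elim by linarith
    then have L1: "1 < L n" unfolding L_def
      by (metis exp_gt_zero less_trans ln_exp ln_less_cancel_iff)
    then have "ln (L n) > 0" by simp
    then have "e n > 0" by (simp add: e_def L_def)
    have hs0: "hs n > 0" using hs[of n] elim by auto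
    have "2*\<alpha>/hs n powr r + 2*\<beta>/hs n powr s > 0"
      using hs0 assms by (intro add_pos_pos divide_pos_pos) auto
    then have "L n - e n > 0" using hs[of n] elim by (simp add: L_def e_def)
    then show ?case using hp[of n] hs[of n] elim L1
      by (auto simp: Ap_def Bp_def As_def Bs_def c_def d_def L_def e_def)
  qed
  have LT: "filterlim (\<lambda>n. L n + e n) at_top sequentially"
    unfolding L_def e_def by real_asymp
  have LT2: "filterlim (\<lambda>n. L n - e n) at_top sequentially"
    unfolding L_def e_def by real_asymp
  have r1: "((\<lambda>n. Bp n / (L n + e n)) \<longlongrightarrow> 1) sequentially"
    by (rule aux_ratio[OF q cd LT, where A = Ap])
       (rule eventually_mono[OF basic], use cd in \<open>auto simp: Ap_def Bp_def rel\<close>)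
  have r2: "((\<lambda>n. Bs n / (L n - e n)) \<longlongrightarrow> 1) sequentially"
    by (rule aux_ratio[OF q cd LT2, where A = As])
       (rule eventually_mono[OF basic], use cd in \<open>auto simp: As_def Bs_def rel\<close>)
  have l1: "((\<lambda>n. (L n + e n) / L n) \<longlongrightarrow> 1) sequentially"
    unfolding L_def e_def by real_asymp
  have l2: "((\<lambda>n. (L n - e n) / L n) \<longlongrightarrow> 1) sequentially"
    unfolding L_def e_def by real_asymp
  have bp: "((\<lambda>n. Bp n / L n) \<longlongrightarrow> 1) sequentially"
  proof -
    have "((\<lambda>n. Bp n / (L n + e n) * ((L n + e n) / L n)) \<longlongrightarrow> 1 * 1) sequentially"
      by (intro tendsto_intros r1 l1)
    moreover have "eventually (\<lambda>n. Bp n / (L n + e n) * ((L n + e n) / L n) = Bp n / L n) sequentially"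
      using basic by eventually_elim auto
    ultimately show ?thesis by (simp add: Lim_transform_eventually)
  qed
  have bs: "((\<lambda>n. Bs n / L n) \<longlongrightarrow> 1) sequentially"
  proof -
    have "((\<lambda>n. Bs n / (L n - e n) * ((L n - e n) / L n)) \<longlongrightarrow> 1 * 1) sequentially"
      by (intro tendsto_intros r2 l2)
    moreover have "eventually (\<lambda>n. Bs n / (L n - e n) * ((L n - e n) / L n) = Bs n / L n) sequentially"
      using basic by eventually_elim auto
    ultimately show ?thesis by (simp add: Lim_transform_eventually)
  qed
  have evp: "eventually (\<lambda>n. hp n = (Bp n/d) powr (-1/s) \<and> Bp n > 0 \<and> L n > 0) sequentially"
    using basic
  proof eventually_elim
    case (elim n)
    have "hp n = (Bp n/d) powr (-1/s)" unfolding Bp_def using hrel[of "hp n"] elim by blast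
    moreover have "Bp n > 0" unfolding Bp_def using elim cd by simp
    ultimately show ?case using elim by blast
  qed
  have evs: "eventually (\<lambda>n. hs n = (Bs n/d) powr (-1/s) \<and> Bs n > 0 \<and> L n > 0) sequentially"
    using basic
  proof eventually_elim
    case (elim n)
    have "hs n = (Bs n/d) powr (-1/s)" unfolding Bs_def using hrel[of "hs n"] elim by blast
    moreover have "Bs n > 0" unfolding Bs_def using elim cd by simp
    ultimately show ?case using elim by blast
  qed
  have hp1: "((\<lambda>n. hp n / (L n / d) powr (-1/s)) \<longlongrightarrow> 1) sequentially"
    by (rule aux_h[OF bp cd(2) evp])
  have hs1: "((\<lambda>n. hs n / (L n / d) powr (-1/s)) \<longlongrightarrow> 1) sequentially"
    by (rule aux_h[OF bs cd(2) evs])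
  have C1: "hp \<sim>[at_top] (\<lambda>n. (ln (real n) / (2 * \<beta>)) powr (- 1 / s))"
    by (rule asymp_equivI') (use hp1 in \<open>simp add: L_def d_def\<close>)
  have ord: "eventually (\<lambda>n. As n \<le> Ap n \<and> Bp n - Bs n \<le> 2 * e n \<and> Bs n \<le> Bp n) sequentially"
    using basic
  proof eventually_elim
    case (elim n)
    have lt: "hp n < hs n"
    proof (rule ccontr)
      assume "\<not> hp n < hs n"
      then have le: "hs n \<le> hp n" by simp
      have "hs n powr r \<le> hp n powr r" using le elim assms by (intro powr_mono2) auto
      then have "Ap n \<le> As n" unfolding Ap_def As_def using cd elim
        by (intro divide_left_mono) auto
      moreover have "hs n powr s \<le> hp n powr s" using le elim assms by (intro powr_mono2) auto
      then have "Bp n \<le> Bs n" unfolding Bp_def Bs_def using cd elim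
        by (intro divide_left_mono) auto
      ultimately show False using elim by linarith
    qed
    have "hp n powr r < hs n powr r" using lt elim assms by (intro powr_less_mono2) auto
    then have "As n < Ap n" unfolding Ap_def As_def using cd elim
      by (intro divide_strict_left_mono) auto
    moreover have "hp n powr s < hs n powr s" using lt elim assms by (intro powr_less_mono2) auto
    then have "Bs n < Bp n" unfolding Bp_def Bs_def using cd elim
      by (intro divide_strict_left_mono) auto
    ultimately show ?case using elim by linarith
  qed
  have bnd: "eventually (\<lambda>n. 0 \<le> Ap n - As n \<and>
      Ap n - As n \<le> c * 2 / d * ((Bs n / d) powr (q-1) * e n)) sequentially"
    using ord evs evp basic
  proof eventually_elim
    case (elim n)
    have e1: "Ap n = c * (Bp n / d) powr q" unfolding Ap_def Bp_def using rel[of "hp n"] elim by blast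
    have e2: "As n = c * (Bs n / d) powr q" unfolding As_def Bs_def using rel[of "hs n"] elim by blast
    have "Ap n - As n = c * ((Bp n / d) powr q - (Bs n / d) powr q)"
      unfolding e1 e2 by (simp add: right_diff_distrib)
    also have "\<dots> \<le> c * ((Bs n / d) powr (q-1) * (Bp n / d - Bs n / d))"
      using elim cd q by (intro mult_left_mono aux_conc) (auto simp: divide_right_mono)
    also have "\<dots> = c / d * ((Bs n / d) powr (q-1) * (Bp n - Bs n))"
      using cd by (simp add: field_simps)
    also have "\<dots> \<le> c / d * ((Bs n / d) powr (q-1) * (2 * e n))"
      using elim cd by (intro mult_left_mono) auto
    also have "\<dots> = c * 2 / d * ((Bs n / d) powr (q-1) * e n)" by (simp add: ac_simps)
    finally show ?case using elim by simp
  qed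
  have lim0: "((\<lambda>n. (Bs n / d) powr (q-1) * e n) \<longlongrightarrow> 0) sequentially"
  proof -
    have la: "((\<lambda>n. L n powr (q-1) * e n) \<longlongrightarrow> 0) sequentially"
      using q unfolding L_def e_def by real_asymp
    have lb: "((\<lambda>n. (Bs n / L n) powr (q-1)) \<longlongrightarrow> 1) sequentially"
      using tendsto_powr[OF bs tendsto_const, of "q-1"] by simp
    have "((\<lambda>n. (1/d) powr (q-1) * ((Bs n / L n) powr (q-1) * (L n powr (q-1) * e n))) \<longlongrightarrow> (1/d) powr (q-1) * (1 * 0)) sequentially"
      by (intro tendsto_intros la lb)
    moreover have "eventually (\<lambda>n. (1/d) powr (q-1) * ((Bs n / L n) powr (q-1) * (L n powr (q-1) * e n)) = (Bs n / d) powr (q-1) * e n) sequentially"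
      using evs
    proof eventually_elim
      case (elim n)
      have eqd: "Bs n / d = (1/d) * ((Bs n / L n) * L n)" using elim by simp
      have m1: "((1/d) * ((Bs n / L n) * L n)) powr (q-1) = (1/d) powr (q-1) * ((Bs n / L n) * L n) powr (q-1)"
        by (rule powr_mult; use elim cd in auto)
      have m2: "((Bs n / L n) * L n) powr (q-1) = (Bs n / L n) powr (q-1) * L n powr (q-1)"
        by (rule powr_mult; use elim in auto)
      have "(Bs n / d) powr (q-1) = (1/d) powr (q-1) * ((Bs n / L n) powr (q-1) * L n powr (q-1))"
        by (simp only: eqd m1 m2)
      then show ?case by simp
    qed
    ultimately show ?thesis by (simp add: Lim_transform_eventually)
  qed
  have AA: "((\<lambda>n. Ap n - As n) \<longlongrightarrow> 0) sequentially"
  proof (rule real_tendsto_sandwich[OF _ _ tendsto_const])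
    show "((\<lambda>n. c * 2 / d * ((Bs n / d) powr (q-1) * e n)) \<longlongrightarrow> 0) sequentially"
      using tendsto_mult_right_zero[OF lim0, of "c * 2 / d"] by simp
  qed (use bnd in \<open>auto elim: eventually_mono\<close>)
  have C2: "(\<lambda>n. hp n powr a * exp (- 2 * \<alpha> / hp n powr r)) \<sim>[at_top]
         (\<lambda>n. hs n powr a * exp (- 2 * \<alpha> / hs n powr r))"
  proof (rule asymp_equivI')
    define g where "g = (\<lambda>n. (L n / d) powr (-1/s))"
    have "((\<lambda>n. ((hp n / g n) / (hs n / g n)) powr a * exp (- (Ap n - As n))) \<longlongrightarrow> (1 / 1) powr a * exp (- 0)) sequentially"
      using hp1 hs1 AA unfolding g_def by (intro tendsto_intros) auto
    moreover have "eventually (\<lambda>n. ((hp n / g n) / (hs n / g n)) powr a * exp (- (Ap n - As n)) =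
        hp n powr a * exp (- 2 * \<alpha> / hp n powr r) / (hs n powr a * exp (- 2 * \<alpha> / hs n powr r))) sequentially"
      using basic
    proof eventually_elim
      case (elim n)
      have "g n > 0" using elim cd by (simp add: g_def)
      then have "(hp n / g n) / (hs n / g n) = hp n / hs n" by simp
      moreover have "(hp n / hs n) powr a = hp n powr a / hs n powr a"
        using elim by (simp add: powr_divide)
      moreover have "- (Ap n - As n) = (- 2 * \<alpha> / hp n powr r) - (- 2 * \<alpha> / hs n powr r)"
        by (simp add: Ap_def As_def c_def)
      then have "exp (- (Ap n - As n)) = exp (- 2 * \<alpha> / hp n powr r) / exp (- 2 * \<alpha> / hs n powr r)"
        by (simp only: exp_diff)
      ultimately show ?case using \<open>g n > 0\<close> by simp
    qed
    ultimately show "((\<lambda>n. hp n powr a * exp (- 2 * \<alpha> / hp n powr r) / (hs n powr a * exp (- 2 * \<alpha> / hs n powr r))) \<longlongrightarrow> 1) sequentially"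
      by (simp add: Lim_transform_eventually)
  qed
  have C3: "(\<lambda>n. ln (real n) powr b * real n *
            exp (- 2 * \<alpha> / hp n powr r - 2 * \<beta> / hp n powr s)) \<longlonglongrightarrow> 0"
  proof -
    have "((\<lambda>n. ln (real n) powr b * exp (- ((ln (ln (real n)))^2))) \<longlongrightarrow> 0) sequentially"
      by real_asymp
    moreover have "eventually (\<lambda>n. ln (real n) powr b * exp (- ((ln (ln (real n)))^2)) =
        ln (real n) powr b * real n * exp (- 2 * \<alpha> / hp n powr r - 2 * \<beta> / hp n powr s)) sequentially"
      using basic ev4
    proof eventually_elim
      case (elim n)
      have "- 2 * \<alpha> / hp n powr r - 2 * \<beta> / hp n powr s = - (Ap n + Bp n)"
        by (simp add: Ap_def Bp_def c_def d_def)
      also have "\<dots> = - ln (real n) - (ln (ln (real n)))^2"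
        using elim by (simp add: L_def e_def)
      finally have eq: "- 2 * \<alpha> / hp n powr r - 2 * \<beta> / hp n powr s = - ln (real n) - (ln (ln (real n)))^2" .
      have "real n * exp (- ln (real n) - (ln (ln (real n)))^2) = exp (- ((ln (ln (real n)))^2))"
        using elim by (simp add: exp_diff exp_minus inverse_eq_divide)
      then show ?case unfolding eq by (simp add: mult.assoc)
    qed
    ultimately show ?thesis by (simp add: Lim_transform_eventually)
  qed
  show ?thesis using C1 C2 C3 by blast
qed

end
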